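(* Let $V:\mathbb{R}^d\to\mathbb{R}$ be of class $\mathcal{C}^4$, let $z=0$ be a stationary point with $V(0)=0$, and choose coordinates in which $\nabla^2V(0)=\operatorname{diag}(0,\lambda_2,\dots,\lambda_d)$, where $\lambda_2\neq0$ (of either sign) and $\lambda_3,\dots,\lambda_d>0$. Then there exists a polynomial change of variables $x=y+g(y)$, where $g$ is a polynomial with terms of degree $2$ and $3$, such that $$V(y+g(y))=\frac12\sum_{i=2}^d\lambda_iy_i^2+C_3y_1^3+C_4y_1^4+o(\|y\|^4),$$ where $C_3=V_{111}$ and $C_4=V_{1111}-\frac12\sum_{j=2}^d\frac{V_{11j}^2}{\lambda_j}$.
   Context: For indices $i_1\le\dots\le i_r$ in $\{1,\dots,d\}$, $V_{i_1\dots i_r}=\frac{1}{n_1!\cdots n_d!}\frac{\partial}{\partial x_{i_1}}\cdots\frac{\partial}{\partial x_{i_r}}V(0)$ with $n_j=\#\{k:i_k=j\}$; thus $V_{111}=\frac16\partial_1^3V(0)$, $V_{1111}=\frac1{24}\partial_1^4V(0)$ and $V_{11j}=\frac12\partial_1^2\partial_jV(0)$ for $j\ge2$. *)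

theory Defs
  imports "HOL-Analysis.Analysis" "HOL-Library.Landau_Symbols"
begin

definition partial :: "'n::finite \<Rightarrow> (real^'n \<Rightarrow> real) \<Rightarrow> real^'n \<Rightarrow> real" where
  "partial i f x = deriv (\<lambda>t. f (x + t *\<^sub>R axis i 1)) 0"

fun C_k :: "nat \<Rightarrow> (real^'n::finite \<Rightarrow> real) \<Rightarrow> bool" where
  "C_k 0 f = continuous_on UNIV f"
| "C_k (Suc k) f = (continuous_on UNIV f \<and>
     (\<forall>i x. (\<lambda>t. f (x + t *\<^sub>R axis i 1)) differentiable (at 0)) \<and>
     (\<forall>i. C_k k (partial i f)))"

definition poly_deg23 :: "(real^'n::finite \<Rightarrow> real^'n) \<Rightarrow> bool" where
  "poly_deg23 g \<longleftrightarrow> (\<exists>(c2 :: 'n \<Rightarrow> 'n \<Rightarrow> 'n \<Rightarrow> real) (c3 :: 'n \<Rightarrow> 'n \<Rightarrow> 'n \<Rightarrow> 'n \<Rightarrow> real).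
     \<forall>y. g y = (\<chi> i. (\<Sum>a\<in>UNIV. \<Sum>b\<in>UNIV. c2 i a b * y$a * y$b)
                    + (\<Sum>a\<in>UNIV. \<Sum>b\<in>UNIV. \<Sum>c\<in>UNIV. c3 i a b c * y$a * y$b * y$c)))"

end

theory Submission
  imports Defs
begin


abbreviation ax :: "'n::finite \<Rightarrow> real^'n" where "ax i \<equiv> axis i 1"

lemma C_k_cont: "C_k m f \<Longrightarrow> continuous_on UNIV f"
  by (cases m) auto

lemma C_k_Suc_mono: "C_k (Suc m) f \<Longrightarrow> C_k m f"
proof (induction m arbitrary: f)
  case 0 thus ?case by simp
next
  case (Suc m) thus ?case by auto
qed

lemma partial_deriv_line:
  assumes "\<forall>x. (\<lambda>t. f (x + t *\<^sub>R ax i)) differentiable (at 0)"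
  shows "((\<lambda>t. f (z + t *\<^sub>R ax i)) has_real_derivative partial i f (z + s *\<^sub>R ax i)) (at s)"
proof -
  let ?g = "\<lambda>t. f ((z + s *\<^sub>R ax i) + t *\<^sub>R ax i)"
  have "(?g has_real_derivative partial i f (z + s *\<^sub>R ax i)) (at (s + - s))"
    unfolding partial_def using assms DERIV_deriv_iff_real_differentiable by simp
  hence "((\<lambda>t. ?g (t + - s)) has_real_derivative partial i f (z + s *\<^sub>R ax i)) (at s)"
    by (rule DERIV_shift[THEN iffD1])
  moreover have "(\<lambda>t. ?g (t + - s)) = (\<lambda>t. f (z + t *\<^sub>R ax i))"
    by (auto simp: algebra_simps)
  ultimately show ?thesis by simp
qed

lemma mvt_any:
  fixes \<phi> :: "real \<Rightarrow> real"
  assumes "\<And>t. (\<phi> has_real_derivative \<phi>' t) (at t)"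
  shows "\<exists>s. \<bar>s\<bar> \<le> \<bar>a\<bar> \<and> \<phi> a - \<phi> 0 = \<phi>' s * a"
proof (cases "0 \<le> a")
  case True
  have "\<exists>x\<in>{0..a}. \<phi> a - \<phi> 0 = (\<lambda>h. \<phi>' x * h) (a - 0)"
    apply (rule mvt_very_simple[OF True])
    using assms has_field_derivative_imp_has_derivative has_derivative_at_withinI by blast
  then obtain x where "x\<in>{0..a}" "\<phi> a - \<phi> 0 = \<phi>' x * a" by auto
  then show ?thesis using True by (intro exI[of _ x]) auto
next
  case False
  have "\<exists>x\<in>{a..0}. \<phi> 0 - \<phi> a = (\<lambda>h. \<phi>' x * h) (0 - a)"
    apply (rule mvt_very_simple) using False apply simp
    using assms has_field_derivative_imp_has_derivative has_derivative_at_withinI by blast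
  then obtain x where "x\<in>{a..0}" "\<phi> 0 - \<phi> a = \<phi>' x * (0 - a)" by auto
  then show ?thesis using False by (intro exI[of _ x]) (auto simp: algebra_simps)
qed


lemma C1_aux:
  fixes f :: "real^'n::finite \<Rightarrow> real"
  assumes dif: "\<forall>i x. (\<lambda>t. f (x + t *\<^sub>R ax i)) differentiable (at 0)"
    and pc: "\<forall>i. continuous_on UNIV (partial i f)"
  shows "finite S \<Longrightarrow> \<forall>e>0. \<exists>d>0. \<forall>h. (\<forall>p. p \<notin> S \<longrightarrow> h$p = 0) \<and> norm h < d \<longrightarrow>
      \<bar>f (x + h) - f x - (\<Sum>p\<in>S. partial p f x * h$p)\<bar> \<le> e * norm h"
proof (induction S rule: finite_induct)
  case empty
  have z: "(\<forall>p. h$p = 0) \<longleftrightarrow> h = 0" for h :: "real^'n" by (simp add: vec_eq_iff)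
  show ?case by (simp add: z)
next
  case (insert q S)
  show ?case
  proof (intro allI impI)
    fix e :: real assume e: "e > 0"
    obtain d1 where d1: "d1 > 0" and H1: "\<forall>h. (\<forall>p. p \<notin> S \<longrightarrow> h$p = 0) \<and> norm h < d1 \<longrightarrow> \<bar>f (x + h) - f x - (\<Sum>p\<in>S. partial p f x * h$p)\<bar> \<le> e/2 * norm h"
      using insert.IH e by (meson half_gt_zero)
    have "continuous (at x) (partial q f)" using pc continuous_on_eq_continuous_at by blast
    then obtain d2 where d2: "d2 > 0" and H2: "\<forall>z. norm (z - x) < d2 \<longrightarrow> \<bar>partial q f z - partial q f x\<bar> < e/2"
      using e unfolding continuous_at_real_range by (meson half_gt_zero)
    show "\<exists>d>0. \<forall>h. (\<forall>p. p \<notin> insert q S \<longrightarrow> h$p = 0) \<and> norm h < d \<longrightarrow>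
      \<bar>f (x + h) - f x - (\<Sum>p\<in>insert q S. partial p f x * h$p)\<bar> \<le> e * norm h"
    proof (intro exI[of _ "min d1 d2"] conjI allI impI)
      show "min d1 d2 > 0" using d1 d2 by simp
      fix h :: "real^'n" assume h: "(\<forall>p. p \<notin> insert q S \<longrightarrow> h$p = 0) \<and> norm h < min d1 d2"
      define h' where "h' = h - (h$q) *\<^sub>R ax q"
      have h'c: "h'$p = (if p = q then 0 else h$p)" for p by (simp add: h'_def axis_def)
      have nh': "norm h' \<le> norm h" by (rule norm_le_componentwise_cart) (simp add: h'c)
      have supp: "\<forall>p. p \<notin> S \<longrightarrow> h'$p = 0" using h by (simp add: h'c)
      have I1: "\<bar>f (x + h') - f x - (\<Sum>p\<in>S. partial p f x * h'$p)\<bar> \<le> e/2 * norm h'"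
        using H1 supp nh' h by auto
      have sumeq: "(\<Sum>p\<in>S. partial p f x * h'$p) = (\<Sum>p\<in>S. partial p f x * h$p)"
        using insert.hyps(2) by (intro sum.cong) (auto simp: h'c)
      obtain s where s: "\<bar>s\<bar> \<le> \<bar>h$q\<bar>" and mv: "f (x + h' + h$q *\<^sub>R ax q) - f (x + h' + 0 *\<^sub>R ax q) = partial q f (x + h' + s *\<^sub>R ax q) * h$q"
        using mvt_any[of "\<lambda>t. f (x + h' + t *\<^sub>R ax q)" "\<lambda>t. partial q f (x + h' + t *\<^sub>R ax q)" "h$q"] partial_deriv_line[OF spec[OF dif, of q]] by blast
      have xh: "x + h' + h$q *\<^sub>R ax q = x + h" by (simp add: h'_def)
      have nz: "norm (h' + s *\<^sub>R ax q) \<le> norm h"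
        by (rule norm_le_componentwise_cart) (use s in \<open>auto simp: h'c axis_def\<close>)
      have "norm ((x + h' + s *\<^sub>R ax q) - x) < d2" using nz h by (simp add: add.assoc)
      hence pq: "\<bar>partial q f (x + h' + s *\<^sub>R ax q) - partial q f x\<bar> \<le> e/2" using H2 less_imp_le by blast
      have "f (x+h) - f x - (\<Sum>p\<in>insert q S. partial p f x * h$p) = (f (x + h') - f x - (\<Sum>p\<in>S. partial p f x * h'$p)) + (partial q f (x + h' + s *\<^sub>R ax q) - partial q f x) * h$q"
        using mv[unfolded xh] sumeq insert.hyps by (simp add: algebra_simps)
      also have "\<bar>\<dots>\<bar> \<le> e/2 * norm h' + e/2 * \<bar>h$q\<bar>"
      proof -
        have "\<bar>(partial q f (x + h' + s *\<^sub>R ax q) - partial q f x) * h$q\<bar> \<le> e/2 * \<bar>h$q\<bar>"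
          unfolding abs_mult by (rule mult_right_mono[OF pq]) simp
        thus ?thesis using I1 abs_triangle_ineq[of "f (x + h') - f x - (\<Sum>p\<in>S. partial p f x * h'$p)" "(partial q f (x + h' + s *\<^sub>R ax q) - partial q f x) * h$q"] by linarith
      qed
      also have "\<dots> \<le> e/2 * norm h + e/2 * norm h" using nh' component_le_norm_cart[of h q] e by (intro add_mono mult_left_mono) auto
      finally show "\<bar>f (x + h) - f x - (\<Sum>p\<in>insert q S. partial p f x * h$p)\<bar> \<le> e * norm h" by simp
    qed
  qed
qed

lemma C1_has_derivative:
  fixes f :: "real^'n::finite \<Rightarrow> real"
  assumes dif: "\<forall>i x. (\<lambda>t. f (x + t *\<^sub>R ax i)) differentiable (at 0)"
    and pc: "\<forall>i. continuous_on UNIV (partial i f)"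
  shows "(f has_derivative (\<lambda>h. \<Sum>p\<in>UNIV. partial p f x * h$p)) (at x)"
  unfolding has_derivative_at_alt
proof (intro conjI allI impI)
  show "bounded_linear (\<lambda>h. \<Sum>p\<in>UNIV. partial p f x * h$p)"
    by (intro bounded_linear_sum bounded_linear_mult_right[THEN bounded_linear_compose] bounded_linear_vec_nth)
  fix e :: real assume "e > 0"
  then obtain d where "d > 0" and H: "\<forall>h. (\<forall>p. p \<notin> (UNIV::'n set) \<longrightarrow> h$p = 0) \<and> norm h < d \<longrightarrow>
      \<bar>f (x + h) - f x - (\<Sum>p\<in>UNIV. partial p f x * h$p)\<bar> \<le> e * norm h"
    using C1_aux[OF dif pc, of UNIV x] by auto
  show "\<exists>d>0. \<forall>y. norm (y - x) < d \<longrightarrow> norm (f y - f x - (\<Sum>p\<in>UNIV. partial p f x * (y - x)$p)) \<le> e * norm (y - x)"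
    using H[rule_format, of "y - x" for y] \<open>d>0\<close> by (intro exI[of _ d]) auto
qed

lemma C1_line_deriv:
  fixes F :: "real^'n::finite \<Rightarrow> real"
  assumes "C_k (Suc m) F"
  shows "((\<lambda>t. F (t *\<^sub>R y)) has_real_derivative (\<Sum>r\<in>UNIV. partial r F (t *\<^sub>R y) * y$r)) (at t)"
proof -
  have c1: "C_k 1 F" using assms
    by (induction m) (auto dest: C_k_Suc_mono)
  hence dif: "\<forall>i x. (\<lambda>t. F (x + t *\<^sub>R ax i)) differentiable (at 0)"
    and pc: "\<forall>i. continuous_on UNIV (partial i F)" by (auto dest: C_k_cont)
  have D: "(F has_derivative (\<lambda>h. \<Sum>p\<in>UNIV. partial p F (t *\<^sub>R y) * h$p)) (at (t *\<^sub>R y))"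
    by (rule C1_has_derivative[OF dif pc])
  have L: "((\<lambda>t. t *\<^sub>R y) has_derivative (\<lambda>s. s *\<^sub>R y)) (at t)"
    by (intro derivative_eq_intros) auto
  have "((\<lambda>t. F (t *\<^sub>R y)) has_derivative (\<lambda>s. \<Sum>p\<in>UNIV. partial p F (t *\<^sub>R y) * (s *\<^sub>R y)$p)) (at t)"
    using has_derivative_compose[OF L D] by (simp add: o_def)
  moreover have "(\<lambda>s. \<Sum>p\<in>UNIV. partial p F (t *\<^sub>R y) * (s *\<^sub>R y)$p) = (*) (\<Sum>r\<in>UNIV. partial r F (t *\<^sub>R y) * y$r)"
    by (auto simp: fun_eq_iff sum_distrib_left algebra_simps)
  ultimately show ?thesis unfolding has_field_derivative_def by simp
qed





lemma C2_parts:
  assumes "C_k 2 f"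
  shows "\<forall>i x. (\<lambda>t. f (x + t *\<^sub>R ax i)) differentiable (at 0)"
    and "\<forall>i j x. (\<lambda>t. partial i f (x + t *\<^sub>R ax j)) differentiable (at 0)"
    and "\<forall>i j. continuous_on UNIV (partial j (partial i f))"
  using assms by (auto simp: numeral_2_eq_2 dest: C_k_cont)

lemma schwarz_aux:
  fixes f :: "real^'n::finite \<Rightarrow> real"
  assumes "C_k 2 f"
  shows "\<exists>\<xi>. norm (\<xi> - a) \<le> 2 * \<bar>t\<bar> \<and> f (a + t *\<^sub>R ax j + t *\<^sub>R ax i) - f (a + t *\<^sub>R ax i) - f (a + t *\<^sub>R ax j) + f a
     = t * t * partial j (partial i f) \<xi>"
proof -
  note P = C2_parts[OF assms]
  have DG: "((\<lambda>s. f ((a + t *\<^sub>R ax j) + s *\<^sub>R ax i) - f (a + s *\<^sub>R ax i)) has_real_derivative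
     (partial i f ((a + t *\<^sub>R ax j) + s *\<^sub>R ax i) - partial i f (a + s *\<^sub>R ax i))) (at s)" for s
    by (intro DERIV_diff partial_deriv_line) (use P(1) in auto)
  obtain \<sigma> where \<sigma>: "\<bar>\<sigma>\<bar> \<le> \<bar>t\<bar>" and m1: "(f ((a + t *\<^sub>R ax j) + t *\<^sub>R ax i) - f (a + t *\<^sub>R ax i)) - (f ((a + t *\<^sub>R ax j) + 0 *\<^sub>R ax i) - f (a + 0 *\<^sub>R ax i))
     = (partial i f ((a + t *\<^sub>R ax j) + \<sigma> *\<^sub>R ax i) - partial i f (a + \<sigma> *\<^sub>R ax i)) * t"
    using mvt_any[OF DG, of t] by blast
  have DH: "((\<lambda>r. partial i f ((a + \<sigma> *\<^sub>R ax i) + r *\<^sub>R ax j)) has_real_derivative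
     partial j (partial i f) ((a + \<sigma> *\<^sub>R ax i) + r *\<^sub>R ax j)) (at r)" for r
    by (intro partial_deriv_line) (use P(2) in auto)
  obtain \<rho> where \<rho>: "\<bar>\<rho>\<bar> \<le> \<bar>t\<bar>" and m2: "partial i f ((a + \<sigma> *\<^sub>R ax i) + t *\<^sub>R ax j) - partial i f ((a + \<sigma> *\<^sub>R ax i) + 0 *\<^sub>R ax j)
     = partial j (partial i f) ((a + \<sigma> *\<^sub>R ax i) + \<rho> *\<^sub>R ax j) * t"
    using mvt_any[OF DH, of t] by blast
  have e1: "(a + t *\<^sub>R ax j) + \<sigma> *\<^sub>R ax i = (a + \<sigma> *\<^sub>R ax i) + t *\<^sub>R ax j" by (simp add: algebra_simps)
  have "norm ((a + \<sigma> *\<^sub>R ax i + \<rho> *\<^sub>R ax j) - a) = norm (\<sigma> *\<^sub>R ax i + \<rho> *\<^sub>R ax j)"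
    by (simp add: algebra_simps)
  also have "\<dots> \<le> norm (\<sigma> *\<^sub>R ax i) + norm (\<rho> *\<^sub>R ax j)"
    by (rule norm_triangle_ineq)
  also have "\<dots> \<le> 2 * \<bar>t\<bar>" using \<sigma> \<rho> by simp
  finally have nx: "norm ((a + \<sigma> *\<^sub>R ax i + \<rho> *\<^sub>R ax j) - a) \<le> 2 * \<bar>t\<bar>" .
  have "f (a + t *\<^sub>R ax j + t *\<^sub>R ax i) - f (a + t *\<^sub>R ax i) - f (a + t *\<^sub>R ax j) + f a
     = (partial i f ((a + \<sigma> *\<^sub>R ax i) + t *\<^sub>R ax j) - partial i f (a + \<sigma> *\<^sub>R ax i)) * t"
    using m1 unfolding e1 by simp
  also have "\<dots> = t * t * partial j (partial i f) ((a + \<sigma> *\<^sub>R ax i) + \<rho> *\<^sub>R ax j)"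
    using m2 by simp
  finally show ?thesis using nx by blast
qed

lemma schwarz:
  fixes f :: "real^'n::finite \<Rightarrow> real"
  assumes "C_k 2 f"
  shows "partial i (partial j f) a = partial j (partial i f) a"
proof (rule ccontr)
  let ?P = "partial j (partial i f)" and ?Q = "partial i (partial j f)"
  assume ne: "?Q a \<noteq> ?P a"
  define e where "e = \<bar>?Q a - ?P a\<bar> / 2"
  have e: "e > 0" using ne by (simp add: e_def)
  note P = C2_parts[OF assms]
  have "continuous (at a) ?P" "continuous (at a) ?Q" using P(3) continuous_on_eq_continuous_at by blast+
  then have c1: "\<forall>e>0. \<exists>d>0. \<forall>z. norm (z - a) < d \<longrightarrow> \<bar>?P z - ?P a\<bar> < e"
    and c2: "\<forall>e>0. \<exists>d>0. \<forall>z. norm (z - a) < d \<longrightarrow> \<bar>?Q z - ?Q a\<bar> < e"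
    unfolding continuous_at_real_range by blast+
  obtain d1 where d1: "d1 > 0" "\<forall>z. norm (z - a) < d1 \<longrightarrow> \<bar>?P z - ?P a\<bar> < e"
    using c1 e by blast
  obtain d2 where d2: "d2 > 0" "\<forall>z. norm (z - a) < d2 \<longrightarrow> \<bar>?Q z - ?Q a\<bar> < e"
    using c2 e by blast
  define t where "t = min d1 d2 / 4"
  have t: "t > 0" "2 * \<bar>t\<bar> < d1" "2 * \<bar>t\<bar> < d2" using d1 d2 by (auto simp: t_def)
  obtain \<xi>1 where x1: "norm (\<xi>1 - a) \<le> 2 * \<bar>t\<bar>" and E1: "f (a + t *\<^sub>R ax j + t *\<^sub>R ax i) - f (a + t *\<^sub>R ax i) - f (a + t *\<^sub>R ax j) + f a
     = t * t * ?P \<xi>1" using schwarz_aux[OF assms] by blast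
  obtain \<xi>2 where x2: "norm (\<xi>2 - a) \<le> 2 * \<bar>t\<bar>" and E2: "f (a + t *\<^sub>R ax i + t *\<^sub>R ax j) - f (a + t *\<^sub>R ax j) - f (a + t *\<^sub>R ax i) + f a
     = t * t * ?Q \<xi>2" using schwarz_aux[OF assms, of a t i j] by blast
  have eqa: "a + t *\<^sub>R ax i + t *\<^sub>R ax j = a + t *\<^sub>R ax j + t *\<^sub>R ax i" by (simp add: algebra_simps)
  have "t * t * ?P \<xi>1 = t * t * ?Q \<xi>2" using E1 E2[unfolded eqa] by linarith
  hence eq: "?P \<xi>1 = ?Q \<xi>2" using t by simp
  have "\<bar>?P \<xi>1 - ?P a\<bar> < e" using d1(2) x1 t(2) by simp
  moreover have "\<bar>?Q \<xi>2 - ?Q a\<bar> < e" using d2(2) x2 t(3) by simp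
  ultimately have "\<bar>?Q a - ?P a\<bar> < 2 * e" using eq by (auto simp: abs_less_iff)
  thus False by (simp add: e_def)
qed




lemma C_k_mono: "m \<le> n \<Longrightarrow> C_k n f \<Longrightarrow> C_k m f"
proof (induction n arbitrary: m)
  case 0 thus ?case by simp
next
  case (Suc n) show ?case
  proof (cases "m = Suc n")
    case True thus ?thesis using Suc.prems by simp
  next
    case False hence "m \<le> n" using Suc.prems by simp
    thus ?thesis using Suc.IH C_k_Suc_mono[OF Suc.prems(2)] by blast
  qed
qed

fun dd :: "real^'n::finite \<Rightarrow> nat \<Rightarrow> (real^'n \<Rightarrow> real) \<Rightarrow> real^'n \<Rightarrow> real" where
  "dd x 0 F = F"
| "dd x (Suc m) F = (\<lambda>z. \<Sum>p\<in>UNIV. dd x m (partial p F) z * x$p)"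

lemma dd_deriv:
  "C_k (Suc m) F \<Longrightarrow> ((\<lambda>t. dd x m F (t *\<^sub>R x)) has_real_derivative dd x (Suc m) F (t *\<^sub>R x)) (at t)"
proof (induction m arbitrary: F)
  case 0
  then show ?case using C1_line_deriv[OF 0, of x t] by simp
next
  case (Suc m)
  have "\<And>p. C_k (Suc m) (partial p F)" using Suc.prems by simp
  hence "\<And>p. ((\<lambda>t. dd x m (partial p F) (t *\<^sub>R x) * x$p) has_real_derivative dd x (Suc m) (partial p F) (t *\<^sub>R x) * x$p) (at t)"
    by (intro DERIV_cmult_right Suc.IH)
  hence "((\<lambda>t. \<Sum>p\<in>UNIV. dd x m (partial p F) (t *\<^sub>R x) * x$p) has_real_derivative (\<Sum>p\<in>UNIV. dd x (Suc m) (partial p F) (t *\<^sub>R x) * x$p)) (at t)"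
    by (intro DERIV_sum)
  thus ?case by simp
qed

lemma dd_small:
  "C_k m F \<Longrightarrow> \<forall>e>0. \<exists>d>0. \<forall>x z. norm z < d \<longrightarrow> \<bar>dd x m F z - dd x m F 0\<bar> \<le> e * norm x ^ m"
proof (induction m arbitrary: F)
  case 0
  hence "continuous (at 0) F" using C_k_cont continuous_on_eq_continuous_at by blast
  hence "\<forall>e>0. \<exists>d>0. \<forall>z. norm (z - 0) < d \<longrightarrow> \<bar>F z - F 0\<bar> < e" unfolding continuous_at_real_range by blast
  then show ?case by (force intro: less_imp_le)
next
  case (Suc m)
  show ?case
  proof (intro allI impI)
    fix e :: real assume e: "e > 0"
    define e' where "e' = e / real CARD('a)"
    have e': "e' > 0" using e by (simp add: e'_def)
    have "\<forall>p. \<exists>d>0. \<forall>x z. norm z < d \<longrightarrow> \<bar>dd x m (partial p F) z - dd x m (partial p F) 0\<bar> \<le> e' * norm x ^ m"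
      using Suc.IH Suc.prems e' by simp
    then obtain D where D: "\<And>p. D p > 0" "\<And>p x z. norm z < D p \<Longrightarrow> \<bar>dd x m (partial p F) z - dd x m (partial p F) 0\<bar> \<le> e' * norm x ^ m"
      by metis
    define d where "d = Min (range D)"
    have d: "d > 0" using D(1) by (simp add: d_def)
    have dle: "d \<le> D p" for p by (simp add: d_def)
    show "\<exists>d>0. \<forall>x z. norm z < d \<longrightarrow> \<bar>dd x (Suc m) F z - dd x (Suc m) F 0\<bar> \<le> e * norm x ^ Suc m"
    proof (intro exI[of _ d] conjI allI impI d)
      fix x z :: "real^'a" assume z: "norm z < d"
      have "\<bar>dd x (Suc m) F z - dd x (Suc m) F 0\<bar> = \<bar>\<Sum>p\<in>UNIV. (dd x m (partial p F) z - dd x m (partial p F) 0) * x$p\<bar>"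
        by (simp add: sum_subtractf left_diff_distrib)
      also have "\<dots> \<le> (\<Sum>p\<in>UNIV. \<bar>(dd x m (partial p F) z - dd x m (partial p F) 0) * x$p\<bar>)"
        by (rule sum_abs)
      also have "\<dots> \<le> (\<Sum>p\<in>(UNIV::'a set). e' * norm x ^ m * norm x)"
      proof (rule sum_mono)
        fix p :: 'a
        have "\<bar>dd x m (partial p F) z - dd x m (partial p F) 0\<bar> \<le> e' * norm x ^ m"
          using D(2)[of z p x] z dle[of p] by simp
        moreover have "\<bar>x$p\<bar> \<le> norm x" by (rule component_le_norm_cart)
        ultimately show "\<bar>(dd x m (partial p F) z - dd x m (partial p F) 0) * x$p\<bar> \<le> e' * norm x ^ m * norm x"
          unfolding abs_mult using e' by (intro mult_mono) auto
      qed
      also have "\<dots> = e * norm x ^ Suc m" by (simp add: e'_def)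
      finally show "\<bar>dd x (Suc m) F z - dd x (Suc m) F 0\<bar> \<le> e * norm x ^ Suc m" .
    qed
  qed
qed

lemma taylor_o:
  fixes V :: "real^'n::finite \<Rightarrow> real"
  assumes C4: "C_k 4 V"
  shows "\<forall>e>0. \<exists>d>0. \<forall>x. norm x < d \<longrightarrow> \<bar>V x - ((\<Sum>m<4. dd x m V 0 / fact m) + dd x 4 V 0 / fact 4)\<bar> \<le> e * norm x ^ 4"
proof (intro allI impI)
  fix e :: real assume e: "e > 0"
  obtain d where d: "d > 0" and H: "\<forall>x z. norm z < d \<longrightarrow> \<bar>dd x 4 V z - dd x 4 V 0\<bar> \<le> (24 * e) * norm x ^ 4"
    using dd_small[OF C4] e by (meson mult_pos_pos zero_less_numeral)
  show "\<exists>d>0. \<forall>x. norm x < d \<longrightarrow> \<bar>V x - ((\<Sum>m<4. dd x m V 0 / fact m) + dd x 4 V 0 / fact 4)\<bar> \<le> e * norm x ^ 4"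
  proof (intro exI[of _ d] conjI allI impI d)
    fix x :: "real^'n" assume x: "norm x < d"
    have "\<exists>t. 0 < t \<and> t < 1 \<and> (\<lambda>t. V (t *\<^sub>R x)) 1 = (\<Sum>m<4. (dd x m V (0 *\<^sub>R x) / fact m) * 1 ^ m) + (dd x 4 V (t *\<^sub>R x) / fact 4) * 1 ^ 4"
    proof (rule Maclaurin[where diff = "\<lambda>m t. dd x m V (t *\<^sub>R x)"])
      show "(\<lambda>m t. dd x m V (t *\<^sub>R x)) 0 = (\<lambda>t. V (t *\<^sub>R x))" by simp
      show "\<forall>m t. m < 4 \<and> 0 \<le> t \<and> t \<le> 1 \<longrightarrow> ((\<lambda>t. dd x m V (t *\<^sub>R x)) has_real_derivative dd x (Suc m) V (t *\<^sub>R x)) (at t)"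
        using dd_deriv C_k_mono[OF _ C4] by (metis Suc_leI)
    qed auto
    then obtain t where t: "0 < t" "t < 1" and T: "V x = (\<Sum>m<4. dd x m V 0 / fact m) + dd x 4 V (t *\<^sub>R x) / fact 4"
      by auto
    have "t * norm x \<le> 1 * norm x" by (rule mult_right_mono) (use t in auto)
    hence "norm (t *\<^sub>R x) < d" using t x by simp
    hence HH: "\<bar>dd x 4 V (t *\<^sub>R x) - dd x 4 V 0\<bar> \<le> (24 * e) * norm x ^ 4" using H by blast
    have eq: "V x - ((\<Sum>m<4. dd x m V 0 / fact m) + dd x 4 V 0 / fact 4) = (dd x 4 V (t *\<^sub>R x) - dd x 4 V 0) / 24"
      using T by (simp add: fact_numeral diff_divide_distrib)
    have "\<bar>(dd x 4 V (t *\<^sub>R x) - dd x 4 V 0) / 24\<bar> = \<bar>dd x 4 V (t *\<^sub>R x) - dd x 4 V 0\<bar> / 24"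
      by simp
    also have "\<dots> \<le> e * norm x ^ 4" using HH by simp
    finally show "\<bar>V x - ((\<Sum>m<4. dd x m V 0 / fact m) + dd x 4 V 0 / fact 4)\<bar> \<le> e * norm x ^ 4"
      unfolding eq .
  qed
qed




definition Bf :: "('n::finite \<Rightarrow> real) \<Rightarrow> real^'n \<Rightarrow> real^'n \<Rightarrow> real" where
  "Bf l a b = (\<Sum>p\<in>UNIV. l p * a$p * b$p)"
definition A3 :: "('n::finite \<Rightarrow> 'n \<Rightarrow> 'n \<Rightarrow> real) \<Rightarrow> real^'n \<Rightarrow> real^'n \<Rightarrow> real^'n \<Rightarrow> real" where
  "A3 t a b c = (\<Sum>p\<in>UNIV. \<Sum>q\<in>UNIV. \<Sum>r\<in>UNIV. t r q p * a$r * b$q * c$p)"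
definition A4 :: "('n::finite \<Rightarrow> 'n \<Rightarrow> 'n \<Rightarrow> 'n \<Rightarrow> real) \<Rightarrow> real^'n \<Rightarrow> real^'n \<Rightarrow> real^'n \<Rightarrow> real^'n \<Rightarrow> real" where
  "A4 t a b c d = (\<Sum>p\<in>UNIV. \<Sum>q\<in>UNIV. \<Sum>r\<in>UNIV. \<Sum>s\<in>UNIV. t s r q p * a$s * b$r * c$q * d$p)"
definition qf :: "('n::finite \<Rightarrow> 'n \<Rightarrow> real) \<Rightarrow> real^'n \<Rightarrow> real" where
  "qf c y = (\<Sum>a\<in>UNIV. \<Sum>b\<in>UNIV. c a b * y$a * y$b)"
definition cf :: "('n::finite \<Rightarrow> 'n \<Rightarrow> 'n \<Rightarrow> real) \<Rightarrow> real^'n \<Rightarrow> real" where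
  "cf c y = (\<Sum>a\<in>UNIV. \<Sum>b\<in>UNIV. \<Sum>d\<in>UNIV. c a b d * y$a * y$b * y$d)"
definition rf :: "('n::finite \<Rightarrow> 'n \<Rightarrow> 'n \<Rightarrow> 'n \<Rightarrow> real) \<Rightarrow> real^'n \<Rightarrow> real" where
  "rf r y = (\<Sum>a\<in>UNIV. \<Sum>b\<in>UNIV. \<Sum>c\<in>UNIV. \<Sum>d\<in>UNIV. r a b c d * y$a * y$b * y$c * y$d)"

definition uk :: "'n::finite \<Rightarrow> real^'n \<Rightarrow> real^'n" where
  "uk k y = (\<chi> i. if i = k then y$k else 0)"

lemma Bf_add1: "Bf l (a + b) c = Bf l a c + Bf l b c"
  and Bf_add2: "Bf l c (a + b) = Bf l c a + Bf l c b"
  by (simp_all add: Bf_def algebra_simps sum.distrib)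

lemma A3_add:
  "A3 t (a + a') b c = A3 t a b c + A3 t a' b c"
  "A3 t a (b + b') c = A3 t a b c + A3 t a b' c"
  "A3 t a b (c + c') = A3 t a b c + A3 t a b c'"
  by (simp_all add: A3_def algebra_simps sum.distrib)

lemma A4_add:
  "A4 t (a + a') b c d = A4 t a b c d + A4 t a' b c d"
  "A4 t a (b + b') c d = A4 t a b c d + A4 t a b' c d"
  "A4 t a b (c + c') d = A4 t a b c d + A4 t a b c' d"
  "A4 t a b c (d + d') = A4 t a b c d + A4 t a b c d'"
  by (simp_all add: A4_def algebra_simps sum.distrib)

lemma uk_nth: "uk k y $ i = (if i = k then y$k else 0)"
  by (simp add: uk_def)

lemma if0_mult: "(if P then a else 0) * (x::real) = (if P then a * x else 0)"
  "x * (if P then a else 0) = (if P then x * a else 0)"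
  by auto

lemma sum_uk: "(\<Sum>i\<in>UNIV. uk k y $ i * f i) = y$k * f k"
  by (simp add: uk_nth if0_mult sum.delta')

lemma qf_alt: "qf c y = (\<Sum>a\<in>UNIV. y$a * (\<Sum>b\<in>UNIV. y$b * c a b))"
  by (simp add: qf_def sum_distrib_left mult_ac)
lemma cf_alt: "cf c y = (\<Sum>a\<in>UNIV. y$a * (\<Sum>b\<in>UNIV. y$b * (\<Sum>d\<in>UNIV. y$d * c a b d)))"
  by (simp add: cf_def sum_distrib_left mult_ac)
lemma rf_alt: "rf c y = (\<Sum>a\<in>UNIV. y$a * (\<Sum>b\<in>UNIV. y$b * (\<Sum>d\<in>UNIV. y$d * (\<Sum>e\<in>UNIV. y$e * c a b d e))))"
  by (simp add: rf_def sum_distrib_left mult_ac)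
lemma A3_alt: "A3 t a b c = (\<Sum>p\<in>UNIV. c$p * (\<Sum>q\<in>UNIV. b$q * (\<Sum>r\<in>UNIV. a$r * t r q p)))"
  by (simp add: A3_def sum_distrib_left mult_ac)
lemma A4_alt: "A4 t a b c d = (\<Sum>p\<in>UNIV. d$p * (\<Sum>q\<in>UNIV. c$q * (\<Sum>r\<in>UNIV. b$r * (\<Sum>s\<in>UNIV. a$s * t s r q p))))"
  by (simp add: A4_def sum_distrib_left mult_ac)

lemmas ukS = sum_uk

lemma qf_uk: "qf c (uk k y) = c k k * (y$k)^2"
  by (simp add: qf_alt ukS power2_eq_square)

lemma cf_uk: "cf c (uk k y) = c k k k * (y$k)^3"
  by (simp add: cf_alt ukS power3_eq_cube)

lemma rf_uk: "rf c (uk k y) = c k k k k * (y$k)^4"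
  by (simp add: rf_alt ukS power4_eq_xxxx)

lemma A3_uk1: "A3 t a (uk k y) (uk k y) = (\<Sum>r\<in>UNIV. t r k k * a$r) * (y$k)^2"
  by (simp add: A3_alt ukS) (simp add: power2_eq_square sum_distrib_left mult_ac)

lemma A3_uk2: "A3 t (uk k y) a (uk k y) = (\<Sum>r\<in>UNIV. t k r k * a$r) * (y$k)^2"
  by (simp add: A3_alt ukS) (simp add: power2_eq_square sum_distrib_left mult_ac)

lemma A3_uk3: "A3 t (uk k y) (uk k y) a = (\<Sum>r\<in>UNIV. t k k r * a$r) * (y$k)^2"
  by (simp add: A3_alt ukS) (simp add: power2_eq_square sum_distrib_left mult_ac)

lemma A4_uk: "A4 t (uk k y) (uk k y) (uk k y) (uk k y) = t k k k k * (y$k)^4"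
  by (simp add: A4_alt ukS power4_eq_xxxx)


definition nk :: "'n \<Rightarrow> 'n \<Rightarrow> real" where "nk k j = (if j = k then 0 else 1)"

lemma sum_split_k:
  fixes y :: "real^'n::finite"
  shows "(\<Sum>a\<in>UNIV. y$a * f a) = y$k * f k + (\<Sum>a\<in>UNIV. y$a * (nk k a * f a))"
proof -
  have "(\<Sum>a\<in>UNIV. y$a * f a) = (\<Sum>a\<in>UNIV. (if a = k then y$a * f a else 0) + y$a * (nk k a * f a))"
    by (intro sum.cong) (auto simp: nk_def)
  also have "\<dots> = y$k * f k + (\<Sum>a\<in>UNIV. y$a * (nk k a * f a))"
    by (simp add: sum.distrib sum.delta')
  finally show ?thesis .
qed

definition S3 :: "('n::finite \<Rightarrow> 'n \<Rightarrow> 'n \<Rightarrow> real) \<Rightarrow> 'n \<Rightarrow> real^'n \<Rightarrow> 'n \<Rightarrow> real" where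
  "S3 t k y j = (\<Sum>q\<in>UNIV. y$q * (\<Sum>r\<in>UNIV. y$r * t r q j)) + y$k * (\<Sum>r\<in>UNIV. y$r * t r j k) + y$k * y$k * t j k k"

lemma A3_tel: "A3 t y y y = t k k k * (y$k)^3 + (\<Sum>j\<in>UNIV. y$j * (nk k j * S3 t k y j))"
proof -
  have "A3 t y y y = (\<Sum>p\<in>UNIV. y$p * (\<Sum>q\<in>UNIV. y$q * (\<Sum>r\<in>UNIV. y$r * t r q p)))"
    by (simp add: A3_alt)
  also have "\<dots> = y$k * (\<Sum>q\<in>UNIV. y$q * (\<Sum>r\<in>UNIV. y$r * t r q k)) + (\<Sum>p\<in>UNIV. y$p * (nk k p * (\<Sum>q\<in>UNIV. y$q * (\<Sum>r\<in>UNIV. y$r * t r q p))))"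
    by (rule sum_split_k)
  also have "(\<Sum>q\<in>UNIV. y$q * (\<Sum>r\<in>UNIV. y$r * t r q k)) = y$k * (\<Sum>r\<in>UNIV. y$r * t r k k) + (\<Sum>q\<in>UNIV. y$q * (nk k q * (\<Sum>r\<in>UNIV. y$r * t r q k)))"
    by (rule sum_split_k)
  also have "(\<Sum>r\<in>UNIV. y$r * t r k k) = y$k * t k k k + (\<Sum>r\<in>UNIV. y$r * (nk k r * t r k k))"
    by (rule sum_split_k)
  finally show ?thesis
    by (simp add: S3_def algebra_simps sum.distrib sum_distrib_left power3_eq_cube)
qed

definition S4 :: "('n::finite \<Rightarrow> 'n \<Rightarrow> 'n \<Rightarrow> 'n \<Rightarrow> real) \<Rightarrow> 'n \<Rightarrow> real^'n \<Rightarrow> 'n \<Rightarrow> real" where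
  "S4 r k y j = (\<Sum>b\<in>UNIV. y$b * (\<Sum>c\<in>UNIV. y$c * (\<Sum>d\<in>UNIV. y$d * r j b c d)))
     + y$k * (\<Sum>c\<in>UNIV. y$c * (\<Sum>d\<in>UNIV. y$d * r k j c d))
     + y$k * y$k * (\<Sum>d\<in>UNIV. y$d * r k k j d) + y$k * y$k * y$k * r k k k j"

lemma rf_tel: "rf r y = r k k k k * (y$k)^4 + (\<Sum>j\<in>UNIV. y$j * (nk k j * S4 r k y j))"
proof -
  have "rf r y = (\<Sum>a\<in>UNIV. y$a * (\<Sum>b\<in>UNIV. y$b * (\<Sum>c\<in>UNIV. y$c * (\<Sum>d\<in>UNIV. y$d * r a b c d))))"
    by (simp add: rf_alt)
  also have "\<dots> = y$k * (\<Sum>b\<in>UNIV. y$b * (\<Sum>c\<in>UNIV. y$c * (\<Sum>d\<in>UNIV. y$d * r k b c d))) + (\<Sum>a\<in>UNIV. y$a * (nk k a * (\<Sum>b\<in>UNIV. y$b * (\<Sum>c\<in>UNIV. y$c * (\<Sum>d\<in>UNIV. y$d * r a b c d)))))"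
    by (rule sum_split_k)
  also have "(\<Sum>b\<in>UNIV. y$b * (\<Sum>c\<in>UNIV. y$c * (\<Sum>d\<in>UNIV. y$d * r k b c d))) = y$k * (\<Sum>c\<in>UNIV. y$c * (\<Sum>d\<in>UNIV. y$d * r k k c d)) + (\<Sum>b\<in>UNIV. y$b * (nk k b * (\<Sum>c\<in>UNIV. y$c * (\<Sum>d\<in>UNIV. y$d * r k b c d))))"
    by (rule sum_split_k)
  also have "(\<Sum>c\<in>UNIV. y$c * (\<Sum>d\<in>UNIV. y$d * r k k c d)) = y$k * (\<Sum>d\<in>UNIV. y$d * r k k k d) + (\<Sum>c\<in>UNIV. y$c * (nk k c * (\<Sum>d\<in>UNIV. y$d * r k k c d)))"
    by (rule sum_split_k)
  also have "(\<Sum>d\<in>UNIV. y$d * r k k k d) = y$k * r k k k k + (\<Sum>d\<in>UNIV. y$d * (nk k d * r k k k d))"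
    by (rule sum_split_k)
  finally show ?thesis
    by (simp add: S4_def algebra_simps sum.distrib sum_distrib_left power4_eq_xxxx)
qed


lemma S3_uk: "S3 t k (uk k y) j = (t k k j + t k j k + t j k k) * (y$k)^2"
  unfolding S3_def sum_uk by (simp add: uk_nth power2_eq_square algebra_simps)

definition isL :: "(real^'n::finite \<Rightarrow> real) \<Rightarrow> bool" where "isL f \<longleftrightarrow> (\<exists>c. \<forall>y. f y = (\<Sum>a\<in>UNIV. y$a * c a))"
definition "isQ f \<longleftrightarrow> (\<exists>c. \<forall>y. f y = qf c y)"
definition "isC f \<longleftrightarrow> (\<exists>c. \<forall>y. f y = cf c y)"
definition "isR f \<longleftrightarrow> (\<exists>c. \<forall>y. f y = rf c y)"

lemma isL_lin: "isL (\<lambda>y. \<Sum>r\<in>UNIV. y$r * c r)"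
  unfolding isL_def by (rule exI[of _ c]) simp
lemma isL_nth: "isL (\<lambda>y. y$a)"
  unfolding isL_def by (rule exI[of _ "\<lambda>b. if b = a then 1 else 0"]) (simp add: if0_mult sum.delta')
lemma isL_scale: assumes "isL f" shows "isL (\<lambda>y. c * f y)"
proof -
  obtain d where d: "\<forall>y. f y = (\<Sum>a\<in>UNIV. y$a * d a)" using assms isL_def by blast
  show ?thesis unfolding isL_def by (rule exI[of _ "\<lambda>a. c * d a"]) (simp add: d sum_distrib_left mult_ac)
qed

lemma isQ_alt: "isQ (\<lambda>y. \<Sum>q\<in>UNIV. y$q * (\<Sum>r\<in>UNIV. y$r * c q r))"
  unfolding isQ_def by (rule exI[of _ c]) (simp add: qf_alt)
lemma isQ_scale: assumes "isQ f" shows "isQ (\<lambda>y. c * f y)"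
proof -
  obtain d where d: "\<forall>y. f y = qf d y" using assms isQ_def by blast
  show ?thesis unfolding isQ_def by (rule exI[of _ "\<lambda>a b. c * d a b"]) (simp add: d qf_def sum_distrib_left mult_ac)
qed
lemma isQ_add: assumes "isQ f" "isQ g" shows "isQ (\<lambda>y. f y + g y)"
proof -
  obtain d where d: "\<forall>y. f y = qf d y" using assms isQ_def by blast
  obtain e where e: "\<forall>y. g y = qf e y" using assms isQ_def by blast
  show ?thesis unfolding isQ_def by (rule exI[of _ "\<lambda>a b. d a b + e a b"]) (simp add: d e qf_def sum.distrib algebra_simps)
qed
lemma isQ_LL: assumes "isL f" "isL g" shows "isQ (\<lambda>y. f y * g y)"
proof -
  obtain d where d: "\<forall>y. f y = (\<Sum>a\<in>UNIV. y$a * d a)" using assms isL_def by blast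
  obtain e where e: "\<forall>y. g y = (\<Sum>a\<in>UNIV. y$a * e a)" using assms isL_def by blast
  show ?thesis unfolding isQ_def by (rule exI[of _ "\<lambda>a b. d b * e a"]) (simp add: d e qf_def sum_distrib_left sum_distrib_right mult_ac)
qed

lemma isC_alt: "isC (\<lambda>y. \<Sum>b\<in>UNIV. y$b * (\<Sum>c\<in>UNIV. y$c * (\<Sum>d\<in>UNIV. y$d * r b c d)))"
  unfolding isC_def by (rule exI[of _ r]) (simp add: cf_alt)
lemma isC_scale: assumes "isC f" shows "isC (\<lambda>y. c * f y)"
proof -
  obtain d where d: "\<forall>y. f y = cf d y" using assms isC_def by blast
  show ?thesis unfolding isC_def by (rule exI[of _ "\<lambda>a b e. c * d a b e"]) (simp add: d cf_def sum_distrib_left mult_ac)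
qed
lemma isC_add: assumes "isC f" "isC g" shows "isC (\<lambda>y. f y + g y)"
proof -
  obtain d where d: "\<forall>y. f y = cf d y" using assms isC_def by blast
  obtain e where e: "\<forall>y. g y = cf e y" using assms isC_def by blast
  show ?thesis unfolding isC_def by (rule exI[of _ "\<lambda>a b c. d a b c + e a b c"]) (simp add: d e cf_def sum.distrib algebra_simps)
qed
lemma isC_LQ: assumes "isL f" "isQ g" shows "isC (\<lambda>y. f y * g y)"
proof -
  obtain d where d: "\<forall>y. f y = (\<Sum>a\<in>UNIV. y$a * d a)" using assms isL_def by blast
  obtain e where e: "\<forall>y. g y = qf e y" using assms isQ_def by blast
  show ?thesis unfolding isC_def by (rule exI[of _ "\<lambda>a b c. e a b * d c"]) (simp add: d e qf_def cf_def sum_distrib_left sum_distrib_right mult_ac)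
qed
lemma isC_QL: assumes "isQ f" "isL g" shows "isC (\<lambda>y. f y * g y)"
proof -
  obtain d where d: "\<forall>y. f y = qf d y" using assms isQ_def by blast
  obtain e where e: "\<forall>y. g y = (\<Sum>a\<in>UNIV. y$a * e a)" using assms isL_def by blast
  show ?thesis unfolding isC_def by (rule exI[of _ "\<lambda>a b c. d a b * e c"]) (simp add: d e qf_def cf_def sum_distrib_left sum_distrib_right mult_ac)
qed

lemma isR_scale: assumes "isR f" shows "isR (\<lambda>y. c * f y)"
proof -
  obtain d where d: "\<forall>y. f y = rf d y" using assms isR_def by blast
  show ?thesis unfolding isR_def by (rule exI[of _ "\<lambda>a b e g. c * d a b e g"]) (simp add: d rf_def sum_distrib_left mult_ac)
qed
lemma isR_add: assumes "isR f" "isR g" shows "isR (\<lambda>y. f y + g y)"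
proof -
  obtain d where d: "\<forall>y. f y = rf d y" using assms isR_def by blast
  obtain e where e: "\<forall>y. g y = rf e y" using assms isR_def by blast
  show ?thesis unfolding isR_def by (rule exI[of _ "\<lambda>a b c h. d a b c h + e a b c h"]) (simp add: d e rf_def sum.distrib algebra_simps)
qed
lemma isR_CL: assumes "isC f" "isL g" shows "isR (\<lambda>y. f y * g y)"
proof -
  obtain d where d: "\<forall>y. f y = cf d y" using assms isC_def by blast
  obtain e where e: "\<forall>y. g y = (\<Sum>a\<in>UNIV. y$a * e a)" using assms isL_def by blast
  show ?thesis unfolding isR_def by (rule exI[of _ "\<lambda>a b c h. d a b c * e h"]) (simp add: d e cf_def rf_def sum_distrib_left sum_distrib_right mult_ac)
qed
lemma isR_QQ: assumes "isQ f" "isQ g" shows "isR (\<lambda>y. f y * g y)"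
proof -
  obtain d where d: "\<forall>y. f y = qf d y" using assms isQ_def by blast
  obtain e where e: "\<forall>y. g y = qf e y" using assms isQ_def by blast
  show ?thesis unfolding isR_def by (rule exI[of _ "\<lambda>a b c h. d b c * e a h"]) (simp add: d e qf_def rf_def sum_distrib_left sum_distrib_right mult_ac)
qed
lemma isR_zero: "isR (\<lambda>y. 0)"
  unfolding isR_def by (rule exI[of _ "\<lambda>a b d e. 0"]) (simp add: rf_def)
lemma isR_sum: "finite S \<Longrightarrow> (\<And>i. i \<in> S \<Longrightarrow> isR (f i)) \<Longrightarrow> isR (\<lambda>y. \<Sum>i\<in>S. f i y)"
  by (induction S rule: finite_induct) (auto intro: isR_add isR_zero)


lemma sum_abs_le: "(\<And>i. i \<in> S \<Longrightarrow> \<bar>f i\<bar> \<le> g i) \<Longrightarrow> \<bar>sum f S\<bar> \<le> sum g (S::'i set)" for f :: "'i \<Rightarrow> real"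
  by (metis (no_types, lifting) order_trans sum_abs sum_mono)

lemma prod2_le: "\<bar>t * (a::real^'n::finite)$r * (b::real^'n)$q\<bar> \<le> \<bar>t\<bar> * (norm a * norm b)"
proof -
  have "\<bar>t * a$r * b$q\<bar> = \<bar>t\<bar> * (\<bar>a$r\<bar> * \<bar>b$q\<bar>)" by (simp add: abs_mult mult_ac)
  also have "\<dots> \<le> \<bar>t\<bar> * (norm a * norm b)"
    by (intro mult_left_mono mult_mono component_le_norm_cart) auto
  finally show ?thesis .
qed

lemma prod3_le: "\<bar>t * (a::real^'n::finite)$r * (b::real^'n)$q * (c::real^'n)$p\<bar> \<le> \<bar>t\<bar> * (norm a * norm b * norm c)"
proof -
  have "\<bar>t * a$r * b$q * c$p\<bar> = \<bar>t\<bar> * (\<bar>a$r\<bar> * \<bar>b$q\<bar> * \<bar>c$p\<bar>)" by (simp add: abs_mult mult_ac)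
  also have "\<dots> \<le> \<bar>t\<bar> * (norm a * norm b * norm c)"
    by (intro mult_left_mono mult_mono component_le_norm_cart) auto
  finally show ?thesis .
qed

lemma prod4_le: "\<bar>t * (a::real^'n::finite)$s * (b::real^'n)$r * (c::real^'n)$q * (d::real^'n)$p\<bar> \<le> \<bar>t\<bar> * (norm a * norm b * norm c * norm d)"
proof -
  have "\<bar>t * a$s * b$r * c$q * d$p\<bar> = \<bar>t\<bar> * (\<bar>a$s\<bar> * \<bar>b$r\<bar> * \<bar>c$q\<bar> * \<bar>d$p\<bar>)" by (simp add: abs_mult mult_ac)
  also have "\<dots> \<le> \<bar>t\<bar> * (norm a * norm b * norm c * norm d)"
    by (intro mult_left_mono mult_mono component_le_norm_cart) auto
  finally show ?thesis .
qed

lemma Bf_bound: "\<bar>Bf l a b\<bar> \<le> (\<Sum>p\<in>UNIV. \<bar>l p\<bar>) * (norm a * norm b)"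
proof -
  have "\<bar>Bf l a b\<bar> \<le> (\<Sum>p\<in>UNIV. \<bar>l p\<bar> * (norm a * norm b))"
    unfolding Bf_def by (intro sum_abs_le prod2_le)
  thus ?thesis by (simp add: sum_distrib_right)
qed

lemma A3_bound: "\<bar>A3 t a b c\<bar> \<le> (\<Sum>p\<in>UNIV. \<Sum>q\<in>UNIV. \<Sum>r\<in>UNIV. \<bar>t r q p\<bar>) * (norm a * norm b * norm c)"
proof -
  have "\<bar>A3 t a b c\<bar> \<le> (\<Sum>p\<in>UNIV. \<Sum>q\<in>UNIV. \<Sum>r\<in>UNIV. \<bar>t r q p\<bar> * (norm a * norm b * norm c))"
    unfolding A3_def by (intro sum_abs_le prod3_le)
  thus ?thesis by (simp add: sum_distrib_right)
qed

lemma A4_bound: "\<bar>A4 t a b c d\<bar> \<le> (\<Sum>p\<in>UNIV. \<Sum>q\<in>UNIV. \<Sum>r\<in>UNIV. \<Sum>s\<in>UNIV. \<bar>t s r q p\<bar>) * (norm a * norm b * norm c * norm d)"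
proof -
  have "\<bar>A4 t a b c d\<bar> \<le> (\<Sum>p\<in>UNIV. \<Sum>q\<in>UNIV. \<Sum>r\<in>UNIV. \<Sum>s\<in>UNIV. \<bar>t s r q p\<bar> * (norm a * norm b * norm c * norm d))"
    unfolding A4_def by (intro sum_abs_le prod4_le)
  thus ?thesis by (simp add: sum_distrib_right)
qed

lemma qf_bound: "\<bar>qf c y\<bar> \<le> (\<Sum>a\<in>UNIV. \<Sum>b\<in>UNIV. \<bar>c a b\<bar>) * norm y ^ 2"
proof -
  have "\<bar>qf c y\<bar> \<le> (\<Sum>a\<in>UNIV. \<Sum>b\<in>UNIV. \<bar>c a b\<bar> * (norm y * norm y))"
    unfolding qf_def by (intro sum_abs_le prod2_le)
  thus ?thesis by (simp add: sum_distrib_right power2_eq_square)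
qed

lemma cf_bound: "\<bar>cf c y\<bar> \<le> (\<Sum>a\<in>UNIV. \<Sum>b\<in>UNIV. \<Sum>d\<in>UNIV. \<bar>c a b d\<bar>) * norm y ^ 3"
proof -
  have "\<bar>cf c y\<bar> \<le> (\<Sum>a\<in>UNIV. \<Sum>b\<in>UNIV. \<Sum>d\<in>UNIV. \<bar>c a b d\<bar> * (norm y * norm y * norm y))"
    unfolding cf_def by (intro sum_abs_le prod3_le)
  thus ?thesis by (simp add: sum_distrib_right power3_eq_cube)
qed

definition Vk :: "nat \<Rightarrow> (real^'n::finite \<Rightarrow> real^'n) \<Rightarrow> bool" where
  "Vk n v \<longleftrightarrow> (\<exists>C\<ge>0. \<forall>y. norm y \<le> 1 \<longrightarrow> norm (v y) \<le> C * norm y ^ n)"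
definition O5 :: "(real^'n::finite \<Rightarrow> real) \<Rightarrow> bool" where
  "O5 f \<longleftrightarrow> (\<exists>C. \<forall>y. norm y \<le> 1 \<longrightarrow> \<bar>f y\<bar> \<le> C * norm y ^ 5)"

lemma Vk_id: "Vk 1 (\<lambda>y. y)"
  unfolding Vk_def by (rule exI[of _ 1]) auto

lemma Vk_add: assumes "Vk n a" "Vk n b" shows "Vk n (\<lambda>y. a y + b y)"
proof -
  obtain C1 where C1: "C1 \<ge> 0" "\<forall>y. norm y \<le> 1 \<longrightarrow> norm (a y) \<le> C1 * norm y ^ n" using assms(1) Vk_def by blast
  obtain C2 where C2: "C2 \<ge> 0" "\<forall>y. norm y \<le> 1 \<longrightarrow> norm (b y) \<le> C2 * norm y ^ n" using assms(2) Vk_def by blast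
  show ?thesis unfolding Vk_def
  proof (intro exI[of _ "C1 + C2"] conjI allI impI)
    show "0 \<le> C1 + C2" using C1 C2 by simp
    fix y :: "real^'a" assume y: "norm y \<le> 1"
    have "norm (a y + b y) \<le> norm (a y) + norm (b y)" by (rule norm_triangle_ineq)
    also have "\<dots> \<le> C1 * norm y ^ n + C2 * norm y ^ n" using C1 C2 y by (intro add_mono) auto
    finally show "norm (a y + b y) \<le> (C1 + C2) * norm y ^ n" by (simp add: algebra_simps)
  qed
qed

lemma Vk_mono: assumes "Vk m a" "n \<le> m" shows "Vk n a"
proof -
  obtain C where C: "C \<ge> 0" "\<forall>y. norm y \<le> 1 \<longrightarrow> norm (a y) \<le> C * norm y ^ m" using assms(1) Vk_def by blast
  show ?thesis unfolding Vk_def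
  proof (intro exI[of _ C] conjI allI impI)
    show "0 \<le> C" by (rule C(1))
    fix y :: "real^'a" assume y: "norm y \<le> 1"
    have "norm y ^ m \<le> norm y ^ n" using y assms(2) by (intro power_decreasing) auto
    thus "norm (a y) \<le> C * norm y ^ n" using C y by (meson mult_left_mono order_trans)
  qed
qed

lemma Vk_qf: "Vk 2 (\<lambda>y. \<chi> j. qf (c j) y)"
  unfolding Vk_def
proof (intro exI[of _ "\<Sum>j\<in>UNIV. \<Sum>a\<in>UNIV. \<Sum>b\<in>UNIV. \<bar>c j a b\<bar>"] conjI allI impI)
  show "0 \<le> (\<Sum>j\<in>UNIV. \<Sum>a\<in>UNIV. \<Sum>b\<in>UNIV. \<bar>c j a b\<bar>)" by (intro sum_nonneg) auto
  fix y :: "real^'a" assume "norm y \<le> 1"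
  have "norm (\<chi> j. qf (c j) y) \<le> (\<Sum>j\<in>UNIV. \<bar>(\<chi> j. qf (c j) y) $ j\<bar>)" by (rule norm_le_l1_cart)
  also have "\<dots> \<le> (\<Sum>j\<in>UNIV. (\<Sum>a\<in>UNIV. \<Sum>b\<in>UNIV. \<bar>c j a b\<bar>) * norm y ^ 2)"
    by (intro sum_mono) (simp add: qf_bound)
  finally show "norm (\<chi> j. qf (c j) y) \<le> (\<Sum>j\<in>UNIV. \<Sum>a\<in>UNIV. \<Sum>b\<in>UNIV. \<bar>c j a b\<bar>) * norm y ^ 2"
    by (simp add: sum_distrib_right)
qed

lemma Vk_cf: "Vk 3 (\<lambda>y. \<chi> j. cf (c j) y)"
  unfolding Vk_def
proof (intro exI[of _ "\<Sum>j\<in>UNIV. \<Sum>a\<in>UNIV. \<Sum>b\<in>UNIV. \<Sum>d\<in>UNIV. \<bar>c j a b d\<bar>"] conjI allI impI)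
  show "0 \<le> (\<Sum>j\<in>UNIV. \<Sum>a\<in>UNIV. \<Sum>b\<in>UNIV. \<Sum>d\<in>UNIV. \<bar>c j a b d\<bar>)" by (intro sum_nonneg) auto
  fix y :: "real^'a" assume "norm y \<le> 1"
  have "norm (\<chi> j. cf (c j) y) \<le> (\<Sum>j\<in>UNIV. \<bar>(\<chi> j. cf (c j) y) $ j\<bar>)" by (rule norm_le_l1_cart)
  also have "\<dots> \<le> (\<Sum>j\<in>UNIV. (\<Sum>a\<in>UNIV. \<Sum>b\<in>UNIV. \<Sum>d\<in>UNIV. \<bar>c j a b d\<bar>) * norm y ^ 3)"
    by (intro sum_mono) (simp add: cf_bound)
  finally show "norm (\<chi> j. cf (c j) y) \<le> (\<Sum>j\<in>UNIV. \<Sum>a\<in>UNIV. \<Sum>b\<in>UNIV. \<Sum>d\<in>UNIV. \<bar>c j a b d\<bar>) * norm y ^ 3"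
    by (simp add: sum_distrib_right)
qed

lemma O5_add: assumes "O5 f" "O5 g" shows "O5 (\<lambda>y. f y + g y)"
proof -
  obtain C1 where C1: "\<forall>y. norm y \<le> 1 \<longrightarrow> \<bar>f y\<bar> \<le> C1 * norm y ^ 5" using assms(1) O5_def by blast
  obtain C2 where C2: "\<forall>y. norm y \<le> 1 \<longrightarrow> \<bar>g y\<bar> \<le> C2 * norm y ^ 5" using assms(2) O5_def by blast
  show ?thesis unfolding O5_def
  proof (intro exI[of _ "C1 + C2"] allI impI)
    fix y :: "real^'a" assume y: "norm y \<le> 1"
    have "\<bar>f y + g y\<bar> \<le> \<bar>f y\<bar> + \<bar>g y\<bar>" by (rule abs_triangle_ineq)
    also have "\<dots> \<le> C1 * norm y ^ 5 + C2 * norm y ^ 5" using C1 C2 y by (intro add_mono) auto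
    finally show "\<bar>f y + g y\<bar> \<le> (C1 + C2) * norm y ^ 5" by (simp add: algebra_simps)
  qed
qed

lemma O5_scale: assumes "O5 f" shows "O5 (\<lambda>y. c * f y)"
proof -
  obtain C1 where C1: "\<forall>y. norm y \<le> 1 \<longrightarrow> \<bar>f y\<bar> \<le> C1 * norm y ^ 5" using assms(1) O5_def by blast
  show ?thesis unfolding O5_def
  proof (intro exI[of _ "\<bar>c\<bar> * C1"] allI impI)
    fix y :: "real^'a" assume y: "norm y \<le> 1"
    have "\<bar>c * f y\<bar> = \<bar>c\<bar> * \<bar>f y\<bar>" by (simp add: abs_mult)
    also have "\<dots> \<le> \<bar>c\<bar> * (C1 * norm y ^ 5)" using C1 y by (intro mult_left_mono) auto
    finally show "\<bar>c * f y\<bar> \<le> \<bar>c\<bar> * C1 * norm y ^ 5" by (simp add: mult_ac)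
  qed
qed

lemma Vk_obtain: "Vk n a \<Longrightarrow> \<exists>C\<ge>0. \<forall>y. norm y \<le> 1 \<longrightarrow> norm (a y) \<le> C * norm y ^ n"
  by (simp add: Vk_def)

lemma pow_le5: "norm (y::real^'n::finite) \<le> 1 \<Longrightarrow> 5 \<le> m \<Longrightarrow> norm y ^ m \<le> norm y ^ 5"
  by (intro power_decreasing) auto

lemma O5_Bf: assumes "Vk n1 a" "Vk n2 b" "5 \<le> n1 + n2" shows "O5 (\<lambda>y. Bf l (a y) (b y))"
proof -
  obtain C1 where C1: "C1 \<ge> 0" "\<forall>y. norm y \<le> 1 \<longrightarrow> norm (a y) \<le> C1 * norm y ^ n1" using Vk_obtain[OF assms(1)] by blast
  obtain C2 where C2: "C2 \<ge> 0" "\<forall>y. norm y \<le> 1 \<longrightarrow> norm (b y) \<le> C2 * norm y ^ n2" using Vk_obtain[OF assms(2)] by blast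
  define M where "M = (\<Sum>p\<in>UNIV. \<bar>l p\<bar>)"
  have M: "M \<ge> 0" by (simp add: M_def sum_nonneg)
  show ?thesis unfolding O5_def
  proof (intro exI[of _ "M * (C1 * C2)"] allI impI)
    fix y :: "real^'a" assume y: "norm y \<le> 1"
    have "\<bar>Bf l (a y) (b y)\<bar> \<le> M * (norm (a y) * norm (b y))" unfolding M_def by (rule Bf_bound)
    also have "\<dots> \<le> M * ((C1 * norm y ^ n1) * (C2 * norm y ^ n2))"
      using C1 C2 y M by (intro mult_left_mono mult_mono) auto
    also have "\<dots> = M * (C1 * C2) * norm y ^ (n1 + n2)" by (simp add: power_add mult_ac)
    also have "\<dots> \<le> M * (C1 * C2) * norm y ^ 5"
      using pow_le5[OF y assms(3)] M C1 C2 by (intro mult_left_mono) auto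
    finally show "\<bar>Bf l (a y) (b y)\<bar> \<le> M * (C1 * C2) * norm y ^ 5" .
  qed
qed

lemma O5_A3: assumes "Vk n1 a" "Vk n2 b" "Vk n3 c" "5 \<le> n1 + n2 + n3" shows "O5 (\<lambda>y. A3 t (a y) (b y) (c y))"
proof -
  obtain C1 where C1: "C1 \<ge> 0" "\<forall>y. norm y \<le> 1 \<longrightarrow> norm (a y) \<le> C1 * norm y ^ n1" using Vk_obtain[OF assms(1)] by blast
  obtain C2 where C2: "C2 \<ge> 0" "\<forall>y. norm y \<le> 1 \<longrightarrow> norm (b y) \<le> C2 * norm y ^ n2" using Vk_obtain[OF assms(2)] by blast
  obtain C3 where C3: "C3 \<ge> 0" "\<forall>y. norm y \<le> 1 \<longrightarrow> norm (c y) \<le> C3 * norm y ^ n3" using Vk_obtain[OF assms(3)] by blast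
  define M where "M = (\<Sum>p\<in>UNIV. \<Sum>q\<in>UNIV. \<Sum>r\<in>UNIV. \<bar>t r q p\<bar>)"
  have M: "M \<ge> 0" by (simp add: M_def sum_nonneg)
  show ?thesis unfolding O5_def
  proof (intro exI[of _ "M * (C1 * C2 * C3)"] allI impI)
    fix y :: "real^'a" assume y: "norm y \<le> 1"
    have "\<bar>A3 t (a y) (b y) (c y)\<bar> \<le> M * (norm (a y) * norm (b y) * norm (c y))" unfolding M_def by (rule A3_bound)
    also have "\<dots> \<le> M * ((C1 * norm y ^ n1) * (C2 * norm y ^ n2) * (C3 * norm y ^ n3))"
      using C1 C2 C3 y M by (intro mult_left_mono mult_mono) auto
    also have "\<dots> = M * (C1 * C2 * C3) * norm y ^ (n1 + n2 + n3)" by (simp add: power_add mult_ac)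
    also have "\<dots> \<le> M * (C1 * C2 * C3) * norm y ^ 5"
      using pow_le5[OF y assms(4)] M C1 C2 C3 by (intro mult_left_mono) auto
    finally show "\<bar>A3 t (a y) (b y) (c y)\<bar> \<le> M * (C1 * C2 * C3) * norm y ^ 5" .
  qed
qed

lemma O5_A4: assumes "Vk n1 a" "Vk n2 b" "Vk n3 c" "Vk n4 d" "5 \<le> n1 + n2 + n3 + n4" shows "O5 (\<lambda>y. A4 t (a y) (b y) (c y) (d y))"
proof -
  obtain C1 where C1: "C1 \<ge> 0" "\<forall>y. norm y \<le> 1 \<longrightarrow> norm (a y) \<le> C1 * norm y ^ n1" using Vk_obtain[OF assms(1)] by blast
  obtain C2 where C2: "C2 \<ge> 0" "\<forall>y. norm y \<le> 1 \<longrightarrow> norm (b y) \<le> C2 * norm y ^ n2" using Vk_obtain[OF assms(2)] by blast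
  obtain C3 where C3: "C3 \<ge> 0" "\<forall>y. norm y \<le> 1 \<longrightarrow> norm (c y) \<le> C3 * norm y ^ n3" using Vk_obtain[OF assms(3)] by blast
  obtain C4 where C4: "C4 \<ge> 0" "\<forall>y. norm y \<le> 1 \<longrightarrow> norm (d y) \<le> C4 * norm y ^ n4" using Vk_obtain[OF assms(4)] by blast
  define M where "M = (\<Sum>p\<in>UNIV. \<Sum>q\<in>UNIV. \<Sum>r\<in>UNIV. \<Sum>s\<in>UNIV. \<bar>t s r q p\<bar>)"
  have M: "M \<ge> 0" by (simp add: M_def sum_nonneg)
  show ?thesis unfolding O5_def
  proof (intro exI[of _ "M * (C1 * C2 * C3 * C4)"] allI impI)
    fix y :: "real^'a" assume y: "norm y \<le> 1"
    have "\<bar>A4 t (a y) (b y) (c y) (d y)\<bar> \<le> M * (norm (a y) * norm (b y) * norm (c y) * norm (d y))" unfolding M_def by (rule A4_bound)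
    also have "\<dots> \<le> M * ((C1 * norm y ^ n1) * (C2 * norm y ^ n2) * (C3 * norm y ^ n3) * (C4 * norm y ^ n4))"
      using C1 C2 C3 C4 y M by (intro mult_left_mono mult_mono) auto
    also have "\<dots> = M * (C1 * C2 * C3 * C4) * norm y ^ (n1 + n2 + n3 + n4)" by (simp add: power_add mult_ac)
    also have "\<dots> \<le> M * (C1 * C2 * C3 * C4) * norm y ^ 5"
      using pow_le5[OF y assms(5)] M C1 C2 C3 C4 by (intro mult_left_mono) auto
    finally show "\<bar>A4 t (a y) (b y) (c y) (d y)\<bar> \<le> M * (C1 * C2 * C3 * C4) * norm y ^ 5" .
  qed
qed




lemma isQ_qf: "isQ (\<lambda>y. qf c y)" unfolding isQ_def by blast
lemma isQ_scaleR: "isQ f \<Longrightarrow> isQ (\<lambda>y. f y * c)" using isQ_scale[of f c] by (simp add: mult.commute)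
lemma isC_scaleR: "isC f \<Longrightarrow> isC (\<lambda>y. f y * c)" using isC_scale[of f c] by (simp add: mult.commute)
lemma Bf_sym: "Bf l a b = Bf l b a" by (simp add: Bf_def mult_ac)
lemma Bf_exp: "Bf l (a + b) (a + b) = Bf l a a + 2 * Bf l a b + Bf l b b"
  by (simp add: Bf_add1 Bf_add2 Bf_sym[of l b a])
lemma A3_exp: "A3 t (a + b) (a + b) (a + b) = A3 t a a a + (A3 t b a a + A3 t a b a + A3 t a a b) + (A3 t b b a + A3 t b a b + A3 t a b b + A3 t b b b)"
  by (simp add: A3_add algebra_simps)
lemma A4_tel: "A4 t (a + b) (a + b) (a + b) (a + b) = A4 t a a a a + A4 t b (a + b) (a + b) (a + b) + A4 t a b (a + b) (a + b) + A4 t a a b (a + b) + A4 t a a a b"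
  by (simp add: A4_add algebra_simps)
lemma sum_nk: "(\<Sum>j\<in>UNIV - {k}. f j) = (\<Sum>j\<in>UNIV. nk k j * f j)" for k :: "'n::finite" and f :: "'n \<Rightarrow> real"
proof -
  have "(\<Sum>j\<in>UNIV. nk k j * f j) = nk k k * f k + (\<Sum>j\<in>UNIV - {k}. nk k j * f j)"
    by (rule sum.remove) auto
  also have "\<dots> = (\<Sum>j\<in>UNIV - {k}. f j)" by (simp add: nk_def)
  finally show ?thesis by simp
qed

theorem proposition2p8:
  fixes V :: "real^'n \<Rightarrow> real" and k :: 'n and lam :: "'n \<Rightarrow> real"
  assumes C4: "C_k 4 V"
    and V0: "V 0 = 0"
    and stat: "\<forall>i. partial i V 0 = 0"
    and hess: "\<forall>i j. partial i (partial j V) 0 = (if i = j then lam i else 0)"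
    and lamk: "lam k = 0"
    and j2: "\<exists>j2. j2 \<noteq> k \<and> lam j2 \<noteq> 0 \<and> (\<forall>j. j \<noteq> k \<and> j \<noteq> j2 \<longrightarrow> lam j > 0)"
  shows "\<exists>g. poly_deg23 g \<and>
     (\<lambda>y. V (y + g y) -
        ((1/2) * (\<Sum>i\<in>UNIV - {k}. lam i * (y$i)^2)
         + ((1/6) * partial k (partial k (partial k V)) 0) * (y$k)^3
         + ((1/24) * partial k (partial k (partial k (partial k V))) 0
            - (1/2) * (\<Sum>j\<in>UNIV - {k}. ((1/2) * partial j (partial k (partial k V)) 0)^2 / lam j))
           * (y$k)^4))
     \<in> o[at 0](\<lambda>y. norm y ^ 4)"
proof -
  obtain j2 where j2: "j2 \<noteq> k" "lam j2 \<noteq> 0" "\<forall>j. j \<noteq> k \<and> j \<noteq> j2 \<longrightarrow> lam j > 0" using j2 by blast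
  have lamnz: "lam j \<noteq> 0" if "j \<noteq> k" for j
    using j2 that by (cases "j = j2") auto
  have nk_lam: "lam j * (nk k j / lam j) = nk k j" for j
    by (cases "j = k") (auto simp: nk_def lamnz)
  have C2V: "C_k 2 V" by (rule C_k_mono[OF _ C4]) simp
  have h4: "C_k (Suc 3) V" using C4 by simp
  have "\<forall>i. C_k 3 (partial i V)" using h4[unfolded C_k.simps(2)] by (rule conjunct2[THEN conjunct2])
  hence C2kV: "C_k 2 (partial k V)" using C_k_mono[of 2 3 "partial k V"] by simp
  define t3 where "t3 = (\<lambda>r q p. partial r (partial q (partial p V)) (0::real^'n))"
  define t4 where "t4 = (\<lambda>s r q p. partial s (partial r (partial q (partial p V))) (0::real^'n))"
  have sym1: "t3 k j k = t3 j k k" for j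
    unfolding t3_def by (rule schwarz[OF C2kV])
  have sym2: "t3 k k j = t3 j k k" for j
  proof -
    have e: "partial k (partial j V) = partial j (partial k V)"
      by (rule ext, rule schwarz[OF C2V])
    have "t3 k k j = t3 k j k" unfolding t3_def e ..
    thus ?thesis using sym1[of j] by simp
  qed
  define T where "T = (\<lambda>x. (1/2) * Bf lam x x + (1/6) * A3 t3 x x x + (1/24) * A4 t4 x x x x)"
  have TT: "(\<Sum>m<4. dd x m V 0 / fact m) + dd x 4 V 0 / fact 4 = T x" for x
  proof -
    have s4: "{..<4::nat} = {0, 1, 2, 3}" by auto
    have d0: "dd x 0 V 0 = 0" using V0 by simp
    have d1: "dd x 1 V 0 = 0" using stat by simp
    have d2: "dd x 2 V 0 = Bf lam x x"
      using hess by (simp add: numeral_2_eq_2 Bf_def if0_mult sum.delta' mult_ac)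
    have d3: "dd x 3 V 0 = A3 t3 x x x"
      by (simp add: numeral_3_eq_3 A3_def t3_def sum_distrib_right sum_distrib_left mult_ac)
    have d4: "dd x 4 V 0 = A4 t4 x x x x"
      by (simp add: eval_nat_numeral A4_def t4_def sum_distrib_right sum_distrib_left mult_ac)
    show ?thesis by (simp add: s4 d0 d1 d2 d3 d4 T_def fact_numeral V0 stat)
  qed
  have Tay: "\<forall>e>0. \<exists>d>0. \<forall>x. norm x < d \<longrightarrow> \<bar>V x - T x\<bar> \<le> e * norm x ^ 4"
    using taylor_o[OF C4] TT by simp
  define S2f where "S2f = (\<lambda>j y. - (nk k j / (6 * lam j)) * S3 t3 k y j)"
  have isQ2: "isQ (S2f j)" for j
  proof -
    have a: "isQ (\<lambda>y. \<Sum>q\<in>UNIV. y$q * (\<Sum>r\<in>UNIV. y$r * t3 r q j))" by (rule isQ_alt)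
    have b: "isQ (\<lambda>y. y$k * (\<Sum>r\<in>UNIV. y$r * t3 r j k))" by (rule isQ_LL[OF isL_nth isL_lin])
    have c: "isQ (\<lambda>y. y$k * y$k * t3 j k k)" by (rule isQ_scaleR[OF isQ_LL[OF isL_nth isL_nth]])
    have "isQ (\<lambda>y. S3 t3 k y j)" unfolding S3_def by (rule isQ_add[OF isQ_add[OF a b] c])
    thus ?thesis unfolding S2f_def by (rule isQ_scale)
  qed
  have "\<forall>j. \<exists>c. \<forall>y. S2f j y = qf c y" using isQ2 unfolding isQ_def by blast
  from choice[OF this] obtain C2 where C2: "\<And>j y. S2f j y = qf (C2 j) y" by blast
  define G2 where "G2 = (\<lambda>y. \<chi> j. qf (C2 j) y)"
  have G2c: "G2 y $ j = S2f j y" for y j by (simp add: G2_def C2)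
  have I3: "A3 t3 y y y + 6 * Bf lam y (G2 y) = t3 k k k * (y$k)^3" for y
  proof -
    have "6 * Bf lam y (G2 y) = (\<Sum>j\<in>UNIV. 6 * (lam j * y$j * S2f j y))"
      by (simp add: Bf_def G2c sum_distrib_left)
    also have "\<dots> = (\<Sum>j\<in>UNIV. - (y$j * (nk k j * S3 t3 k y j)))"
      by (intro sum.cong refl) (auto simp: S2f_def nk_def lamnz)
    finally show ?thesis using A3_tel[of t3 y k] by (simp add: sum_negf)
  qed
  define Z where "Z = (\<lambda>y. 12 * Bf lam (G2 y) (G2 y) + 4 * (A3 t3 (G2 y) y y + A3 t3 y (G2 y) y + A3 t3 y y (G2 y)) + A4 t4 y y y y)"
  have q: "isQ (\<lambda>y. G2 y $ r)" for r by (simp add: G2_def isQ_qf)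
  have RB: "isR (\<lambda>y. Bf lam (G2 y) (G2 y))"
    unfolding Bf_def
    apply (rule isR_sum, simp)
    apply (rule isR_QQ[OF isQ_scale[OF q] q])
    done
  have RA1: "isR (\<lambda>y. A3 t3 (G2 y) y y)"
    unfolding A3_def
    apply (rule isR_sum, simp)+
    apply (rule isR_CL[OF isC_QL[OF isQ_scale[OF q] isL_nth] isL_nth])
    done
  have RA2: "isR (\<lambda>y. A3 t3 y (G2 y) y)"
    unfolding A3_def
    apply (rule isR_sum, simp)+
    apply (rule isR_CL[OF isC_LQ[OF isL_scale[OF isL_nth] q] isL_nth])
    done
  have RA3: "isR (\<lambda>y. A3 t3 y y (G2 y))"
    unfolding A3_def
    apply (rule isR_sum, simp)+
    apply (rule isR_QQ[OF isQ_LL[OF isL_scale[OF isL_nth] isL_nth] q])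
    done
  have RA4: "isR (\<lambda>y. A4 t4 y y y y)"
    unfolding A4_def
    apply (rule isR_sum, simp)+
    apply (rule isR_CL[OF isC_QL[OF isQ_LL[OF isL_scale[OF isL_nth] isL_nth] isL_nth] isL_nth])
    done
  have "isR Z" unfolding Z_def by (intro isR_add isR_scale RB RA1 RA2 RA3 RA4)
  then obtain Rz where Rz: "\<And>y. Z y = rf Rz y" unfolding isR_def by blast
  define S4f where "S4f = (\<lambda>m y. - (nk k m / (24 * lam m)) * S4 Rz k y m)"
  have isC3: "isC (S4f m)" for m
  proof -
    have a: "isC (\<lambda>y. \<Sum>b\<in>UNIV. y$b * (\<Sum>c\<in>UNIV. y$c * (\<Sum>d\<in>UNIV. y$d * Rz m b c d)))" by (rule isC_alt)
    have b: "isC (\<lambda>y. y$k * (\<Sum>c\<in>UNIV. y$c * (\<Sum>d\<in>UNIV. y$d * Rz k m c d)))" by (rule isC_LQ[OF isL_nth isQ_alt])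
    have c: "isC (\<lambda>y. y$k * y$k * (\<Sum>d\<in>UNIV. y$d * Rz k k m d))" by (rule isC_QL[OF isQ_LL[OF isL_nth isL_nth] isL_lin])
    have d: "isC (\<lambda>y. y$k * y$k * y$k * Rz k k k m)" by (rule isC_scaleR[OF isC_QL[OF isQ_LL[OF isL_nth isL_nth] isL_nth]])
    have "isC (\<lambda>y. S4 Rz k y m)" unfolding S4_def by (rule isC_add[OF isC_add[OF isC_add[OF a b] c] d])
    thus ?thesis unfolding S4f_def by (rule isC_scale)
  qed
  have "\<forall>m. \<exists>c. \<forall>y. S4f m y = cf c y" using isC3 unfolding isC_def by blast
  from choice[OF this] obtain C3 where C3: "\<And>m y. S4f m y = cf (C3 m) y" by blast
  define G3 where "G3 = (\<lambda>y. \<chi> m. cf (C3 m) y)"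
  have G3c: "G3 y $ m = S4f m y" for y m by (simp add: G3_def C3)
  have I4: "24 * Bf lam y (G3 y) + Z y = Rz k k k k * (y$k)^4" for y
  proof -
    have "24 * Bf lam y (G3 y) = (\<Sum>j\<in>UNIV. 24 * (lam j * y$j * S4f j y))"
      by (simp add: Bf_def G3c sum_distrib_left)
    also have "\<dots> = (\<Sum>j\<in>UNIV. - (y$j * (nk k j * S4 Rz k y j)))"
      by (intro sum.cong refl) (auto simp: S4f_def nk_def lamnz)
    finally show ?thesis using rf_tel[of Rz y k] Rz[of y] by (simp add: sum_negf)
  qed
  define W where "W = (\<Sum>j\<in>UNIV. nk k j * t3 j k k ^ 2 / lam j)"
  have G2u: "G2 (uk k y) $ j = - (nk k j * t3 j k k / (2 * lam j)) * (y$k)^2" for y j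
  proof -
    have "G2 (uk k y) $ j = - (nk k j / (6 * lam j)) * ((t3 j k k + t3 j k k + t3 j k k) * (y$k)^2)"
      by (simp add: G2c S2f_def S3_uk sym1 sym2)
    also have "\<dots> = - (nk k j * t3 j k k / (2 * lam j)) * (y$k)^2"
      by (simp add: field_simps)
    finally show ?thesis .
  qed
  have Bu: "Bf lam (G2 (uk k y)) (G2 (uk k y)) = W * (y$k)^4 / 4" for y
  proof -
    have "Bf lam (G2 (uk k y)) (G2 (uk k y)) = (\<Sum>j\<in>UNIV. nk k j * t3 j k k ^ 2 / lam j * ((y$k)^4 / 4))"
      unfolding Bf_def G2u
      by (intro sum.cong refl) (auto simp: nk_def lamnz field_simps power2_eq_square power4_eq_xxxx)
    thus ?thesis by (simp add: W_def sum_distrib_right)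
  qed
  have Asum: "(\<Sum>r\<in>UNIV. t3 r k k * G2 (uk k y) $ r) * (y$k)^2 = - (W * (y$k)^4 / 2)" for y
  proof -
    have "(\<Sum>r\<in>UNIV. t3 r k k * G2 (uk k y) $ r) = (\<Sum>r\<in>UNIV. nk k r * t3 r k k ^ 2 / lam r) * (- ((y$k)^2) / 2)"
      unfolding G2u sum_distrib_right by (intro sum.cong refl) (simp add: field_simps power2_eq_square)
    thus ?thesis unfolding W_def[symmetric] by (simp add: power4_eq_xxxx power2_eq_square field_simps)
  qed
  have A1u: "A3 t3 (G2 (uk k y)) (uk k y) (uk k y) = - (W * (y$k)^4 / 2)" for y
    using Asum[of y] by (simp add: A3_uk1)
  have A2u: "A3 t3 (uk k y) (G2 (uk k y)) (uk k y) = - (W * (y$k)^4 / 2)" for y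
    using Asum[of y] by (simp add: A3_uk2 sym1)
  have A3u: "A3 t3 (uk k y) (uk k y) (G2 (uk k y)) = - (W * (y$k)^4 / 2)" for y
    using Asum[of y] by (simp add: A3_uk3 sym1 sym2)
  define C4c where "C4c = (1/24) * t4 k k k k - (1/2) * (\<Sum>j\<in>UNIV - {k}. ((1/2) * t3 j k k)^2 / lam j)"
  have C4W: "24 * C4c = t4 k k k k - 3 * W"
  proof -
    have "(\<Sum>j\<in>UNIV - {k}. ((1/2) * t3 j k k)^2 / lam j) = (\<Sum>j\<in>UNIV. nk k j * (((1/2) * t3 j k k)^2 / lam j))"
      by (rule sum_nk)
    also have "\<dots> = W / 4" unfolding W_def sum_divide_distrib
      by (intro sum.cong refl) (simp add: power2_eq_square field_simps)
    finally show ?thesis by (simp add: C4c_def)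
  qed
  have Zu: "Z (uk k y) = 24 * C4c * (y$k)^4" for y
    unfolding Z_def Bu A1u A2u A3u A4_uk C4W by (simp add: algebra_simps)
  have Rzk: "Rz k k k k = 24 * C4c"
  proof -
    have "Rz k k k k * 1 ^ 4 = 24 * C4c * 1 ^ 4"
      using Zu[of "axis k 1"] Rz[of "uk k (axis k 1)"] rf_uk[of Rz k "axis k 1"] by (simp add: axis_def)
    thus ?thesis by simp
  qed
  define g where "g = (\<lambda>y. G2 y + G3 y)"
  have pg: "poly_deg23 g"
    unfolding poly_deg23_def
    by (rule exI[of _ C2], rule exI[of _ C3]) (simp add: g_def G2_def G3_def qf_def cf_def vec_eq_iff)
  define P where "P = (\<lambda>y. (1/2) * (\<Sum>i\<in>UNIV - {k}. lam i * (y$i)^2) + ((1/6) * t3 k k k) * (y$k)^3 + C4c * (y$k)^4)"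
  have PB: "P y = (1/2) * Bf lam y y + (1/6) * (t3 k k k * (y$k)^3) + C4c * (y$k)^4" for y
  proof -
    have "(\<Sum>i\<in>UNIV - {k}. lam i * (y$i)^2) = (\<Sum>i\<in>UNIV. nk k i * (lam i * (y$i)^2))" by (rule sum_nk)
    also have "\<dots> = Bf lam y y" unfolding Bf_def
      by (intro sum.cong refl) (auto simp: nk_def lamk power2_eq_square)
    finally show ?thesis by (simp add: P_def)
  qed
  define Err where "Err = (\<lambda>y. Bf lam (G2 y) (G3 y) + (1/2) * Bf lam (G3 y) (G3 y)
     + (1/6) * (A3 t3 (G3 y) y y + A3 t3 y (G3 y) y + A3 t3 y y (G3 y))
     + (1/6) * (A3 t3 (g y) (g y) y + A3 t3 (g y) y (g y) + A3 t3 y (g y) (g y) + A3 t3 (g y) (g y) (g y))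
     + (1/24) * (A4 t4 (g y) (y + g y) (y + g y) (y + g y) + A4 t4 y (g y) (y + g y) (y + g y) + A4 t4 y y (g y) (y + g y) + A4 t4 y y y (g y)))"
  have Eeq: "T (y + g y) - P y = Err y" for y
  proof -
    have b1: "Bf lam y (g y) = Bf lam y (G2 y) + Bf lam y (G3 y)" by (simp add: g_def Bf_add2)
    have b2: "Bf lam (g y) (g y) = Bf lam (G2 y) (G2 y) + 2 * Bf lam (G2 y) (G3 y) + Bf lam (G3 y) (G3 y)"
      unfolding g_def by (rule Bf_exp)
    have a1: "A3 t3 (g y) y y = A3 t3 (G2 y) y y + A3 t3 (G3 y) y y" by (simp add: g_def A3_add)
    have a2: "A3 t3 y (g y) y = A3 t3 y (G2 y) y + A3 t3 y (G3 y) y" by (simp add: g_def A3_add)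
    have a3: "A3 t3 y y (g y) = A3 t3 y y (G2 y) + A3 t3 y y (G3 y)" by (simp add: g_def A3_add)
    have i4: "24 * Bf lam y (G3 y) + Z y = 24 * (C4c * (y$k)^4)" using I4[of y] Rzk by simp
    have T1: "T (y + g y) = (1/2) * (Bf lam y y + 2 * Bf lam y (g y) + Bf lam (g y) (g y))
       + (1/6) * (A3 t3 y y y + (A3 t3 (g y) y y + A3 t3 y (g y) y + A3 t3 y y (g y))
           + (A3 t3 (g y) (g y) y + A3 t3 (g y) y (g y) + A3 t3 y (g y) (g y) + A3 t3 (g y) (g y) (g y)))
       + (1/24) * (A4 t4 y y y y + A4 t4 (g y) (y + g y) (y + g y) (y + g y) + A4 t4 y (g y) (y + g y) (y + g y) + A4 t4 y y (g y) (y + g y) + A4 t4 y y y (g y))"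
      unfolding T_def Bf_exp A3_exp A4_tel ..
    have e3: "A3 t3 y y y = t3 k k k * (y$k)^3 - 6 * Bf lam y (G2 y)" using I3[of y] by linarith
    have e4: "A4 t4 y y y y = 24 * (C4c * (y$k)^4) - 24 * Bf lam y (G3 y) - 12 * Bf lam (G2 y) (G2 y)
        - 4 * (A3 t3 (G2 y) y y + A3 t3 y (G2 y) y + A3 t3 y y (G2 y))"
      using i4 unfolding Z_def by linarith
    show ?thesis
      unfolding T1 PB Err_def b1 b2 a1 a2 a3 e3 e4 by (simp add: algebra_simps)
  qed
  have vy: "Vk 1 (\<lambda>y. y)" by (rule Vk_id)
  have v2: "Vk 2 G2" unfolding G2_def by (rule Vk_qf)
  have v3: "Vk 3 G3" unfolding G3_def by (rule Vk_cf)
  have vg: "Vk 2 g" unfolding g_def by (rule Vk_add[OF v2 Vk_mono[OF v3]]) simp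
  have vyg: "Vk 1 (\<lambda>y. y + g y)" by (rule Vk_add[OF vy Vk_mono[OF vg]]) simp
  have o1: "O5 (\<lambda>y. Bf lam (G2 y) (G3 y))" by (rule O5_Bf[OF v2 v3]) simp
  have o2: "O5 (\<lambda>y. Bf lam (G3 y) (G3 y))" by (rule O5_Bf[OF v3 v3]) simp
  have o3: "O5 (\<lambda>y. A3 t3 (G3 y) y y)" by (rule O5_A3[OF v3 vy vy]) simp
  have o4: "O5 (\<lambda>y. A3 t3 y (G3 y) y)" by (rule O5_A3[OF vy v3 vy]) simp
  have o5: "O5 (\<lambda>y. A3 t3 y y (G3 y))" by (rule O5_A3[OF vy vy v3]) simp
  have o6: "O5 (\<lambda>y. A3 t3 (g y) (g y) y)" by (rule O5_A3[OF vg vg vy]) simp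
  have o7: "O5 (\<lambda>y. A3 t3 (g y) y (g y))" by (rule O5_A3[OF vg vy vg]) simp
  have o8: "O5 (\<lambda>y. A3 t3 y (g y) (g y))" by (rule O5_A3[OF vy vg vg]) simp
  have o9: "O5 (\<lambda>y. A3 t3 (g y) (g y) (g y))" by (rule O5_A3[OF vg vg vg]) simp
  have o10: "O5 (\<lambda>y. A4 t4 (g y) (y + g y) (y + g y) (y + g y))" by (rule O5_A4[OF vg vyg vyg vyg]) simp
  have o11: "O5 (\<lambda>y. A4 t4 y (g y) (y + g y) (y + g y))" by (rule O5_A4[OF vy vg vyg vyg]) simp
  have o12: "O5 (\<lambda>y. A4 t4 y y (g y) (y + g y))" by (rule O5_A4[OF vy vy vg vyg]) simp
  have o13: "O5 (\<lambda>y. A4 t4 y y y (g y))" by (rule O5_A4[OF vy vy vy vg]) simp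
  have "O5 Err" unfolding Err_def
    by (intro O5_add O5_scale o1 o2 o3 o4 o5 o6 o7 o8 o9 o10 o11 o12 o13)
  moreover have "(\<lambda>y. T (y + g y) - P y) = Err" using Eeq by auto
  ultimately have oE: "O5 (\<lambda>y. T (y + g y) - P y)" by simp
  have main: "(\<lambda>y. V (y + g y) - P y) \<in> o[at 0](\<lambda>y. norm y ^ 4)"
  proof (rule landau_o.smallI)
    fix c :: real assume c: "c > 0"
    obtain C5 where C5: "\<forall>y. norm y \<le> 1 \<longrightarrow> \<bar>T (y + g y) - P y\<bar> \<le> C5 * norm y ^ 5"
      using oE unfolding O5_def by blast
    obtain K where K: "K \<ge> 0" "\<forall>y. norm y \<le> 1 \<longrightarrow> norm (y + g y) \<le> K * norm y ^ 1"
      using vyg unfolding Vk_def by blast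
    define K' where "K' = K + 1"
    have K': "K' > 0" using K by (simp add: K'_def)
    have "c / (2 * K' ^ 4) > 0" using K' c by simp
    then obtain d where d: "d > 0" "\<forall>x. norm x < d \<longrightarrow> \<bar>V x - T x\<bar> \<le> (c / (2 * K' ^ 4)) * norm x ^ 4"
      using Tay by blast
    define \<delta> where "\<delta> = min 1 (min (d / K') (c / (2 * (\<bar>C5\<bar> + 1))))"
    have \<delta>: "\<delta> > 0" using d K' c by (simp add: \<delta>_def)
    show "\<forall>\<^sub>F y in at 0. norm (V (y + g y) - P y) \<le> c * norm (norm y ^ 4)"
      unfolding eventually_at
    proof (intro exI[of _ \<delta>] conjI ballI impI \<delta>)
      fix y :: "real^'n" assume y: "y \<noteq> 0 \<and> dist y 0 < \<delta>"
      have r: "norm y < \<delta>" using y by simp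
      have r1: "norm y \<le> 1" using r by (simp add: \<delta>_def)
      have nx0: "norm (y + g y) \<le> K * norm y" using K(2) r1 by simp
      have "K * norm y \<le> K' * norm y" by (intro mult_right_mono) (auto simp: K'_def)
      hence nx: "norm (y + g y) \<le> K' * norm y" using nx0 by linarith
      have "norm y < d / K'" using r by (simp add: \<delta>_def)
      hence "K' * norm y < d" using K' by (simp add: field_simps)
      hence "norm (y + g y) < d" using nx by linarith
      hence t1: "\<bar>V (y + g y) - T (y + g y)\<bar> \<le> (c / (2 * K' ^ 4)) * norm (y + g y) ^ 4" using d(2) by blast
      have "norm (y + g y) ^ 4 \<le> (K' * norm y) ^ 4" by (rule power_mono[OF nx]) simp
      hence "(c / (2 * K' ^ 4)) * norm (y + g y) ^ 4 \<le> (c / (2 * K' ^ 4)) * (K' * norm y) ^ 4"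
        using c K' by (intro mult_left_mono) auto
      also have "\<dots> = c / 2 * norm y ^ 4" using K' by (simp add: power_mult_distrib field_simps)
      finally have t1': "\<bar>V (y + g y) - T (y + g y)\<bar> \<le> c / 2 * norm y ^ 4" using t1 by linarith
      have "\<bar>T (y + g y) - P y\<bar> \<le> C5 * norm y ^ 5" using C5 r1 by blast
      also have "\<dots> \<le> \<bar>C5\<bar> * norm y ^ 5" by (intro mult_right_mono) auto
      also have "\<dots> = \<bar>C5\<bar> * norm y * norm y ^ 4"
      proof -
        have "norm y ^ 5 = norm y * norm y ^ 4" by (subst power_Suc[symmetric]) simp
        thus ?thesis by simp
      qed
      also have "\<dots> \<le> c / 2 * norm y ^ 4"
      proof (rule mult_right_mono)
        have "norm y < c / (2 * (\<bar>C5\<bar> + 1))" using r by (simp add: \<delta>_def)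
        hence "(\<bar>C5\<bar> + 1) * norm y < c / 2" by (simp add: field_simps)
        hence "\<bar>C5\<bar> * norm y + norm y < c / 2" by (simp add: algebra_simps)
        thus "\<bar>C5\<bar> * norm y \<le> c / 2" using norm_ge_zero[of y] by linarith
      qed simp
      finally have t2: "\<bar>T (y + g y) - P y\<bar> \<le> c / 2 * norm y ^ 4" .
      have "\<bar>V (y + g y) - P y\<bar> \<le> \<bar>V (y + g y) - T (y + g y)\<bar> + \<bar>T (y + g y) - P y\<bar>" by linarith
      thus "norm (V (y + g y) - P y) \<le> c * norm (norm y ^ 4)" using t1' t2 by simp
    qed
  qed
  show ?thesis
    using pg main unfolding P_def C4c_def t3_def t4_def by blast
qed


end
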